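(* Let $H=\mathbb R^d$, $d\ge1$. Let $b:H\to H$ be continuously differentiable and assume there exist $\omega>0$, $a\ge0$, $K>0$, $N\in\mathbb N$ such that for all $x\in H$: $\langle b(x),x\rangle\le-\omega|x|^2+a$ and $|b(x)|+\|b'(x)\|\le K(1+|x|^{2N})$. Let $\nu$ be the invariant probability measure of the transition semigroup of $dX(t)=b(X(t))\,dt+dW(t)$. Let $(e_1,\dots,e_d)$ be an orthonormal basis of $H$, and for $z\in H$ let $v_z$ be the function in $L^1(H,\nu)$ with $\int_H\langle D\varphi,z\rangle d\nu=\int_Hv_z\varphi\,d\nu$ for all $\varphi\in C^1_b(H)$. Fix $p>1$ and $q=\frac p{p-1}$, and let $D^*$ be the adjoint of the gradient as defined below. Let $F(x)=\sum_{h=1}^d f_h(x)e_h$ with $f_h\in C^1_b(H)$, $h=1,\dots,d$. Then $F$ belongs to the domain of $D^*$ and $$D^*(F)=-\operatorname{div}F+\sum_{h=1}^d v_{e_h}f_h.$$ Moreover, for every $\varphi\in C^2_b(H)$, $$-\tfrac12\,D^*(D\varphi)=\tfrac12\,\Delta\varphi-\tfrac12\sum_{h=1}^d v_{e_h}\,D_h\varphi,$$ where $D_h\varphi=\langle D\varphi,e_h\rangle$.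
   Context: $W$ is a standard $\mathbb R^d$-valued Brownian motion; $\nu$ is the (unique) invariant probability measure of $P_t\varphi(x)=\mathbb E[\varphi(X(t,x))]$. The functions $v_z$ exist and lie in $L^r(H,\nu)$ for all $r\in[1,\infty)$. Adjoint: $F\in L^q(H,\nu;H)$ belongs to the domain of $D^*$ iff there exists $g\in L^q(H,\nu)$ with $\int_H\langle D\varphi,F\rangle\,d\nu=\int_H\varphi\,g\,d\nu$ for all $\varphi\in C^1_b(H)$ (equivalently, iff $|\int_H\langle D\varphi,F\rangle d\nu|\le K_F\|\varphi\|_{L^p(H,\nu)}$ for all $\varphi\in C^1_b(H)$); then $D^*(F)=g$. This is the adjoint of the closure in $L^p(H,\nu)$ of the gradient $D:C^1_b(H)\to L^p(H,\nu;H)$. $C^k_b(H)$ denotes bounded functions with bounded continuous derivatives up to order $k$. *)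

theory Defs
  imports "HOL-Probability.Probability"
begin

definition grad :: "('a::euclidean_space \<Rightarrow> real) \<Rightarrow> 'a \<Rightarrow> 'a" where
  "grad \<phi> x = (\<Sum>i\<in>Basis. frechet_derivative \<phi> (at x) i *\<^sub>R i)"

definition divergence :: "('a::euclidean_space \<Rightarrow> 'a) \<Rightarrow> 'a \<Rightarrow> real" where
  "divergence F x = (\<Sum>i\<in>Basis. frechet_derivative F (at x) i \<bullet> i)"

definition laplacian :: "('a::euclidean_space \<Rightarrow> real) \<Rightarrow> 'a \<Rightarrow> real" where
  "laplacian \<phi> = divergence (grad \<phi>)"

definition C1b :: "('a::euclidean_space \<Rightarrow> real) \<Rightarrow> bool" where
  "C1b \<phi> \<longleftrightarrow> bounded (range \<phi>) \<and> (\<forall>x. \<phi> differentiable (at x))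
      \<and> continuous_on UNIV (grad \<phi>) \<and> bounded (range (grad \<phi>))"

definition C2b :: "('a::euclidean_space \<Rightarrow> real) \<Rightarrow> bool" where
  "C2b \<phi> \<longleftrightarrow> C1b \<phi> \<and> (\<forall>i\<in>Basis. C1b (\<lambda>x. grad \<phi> x \<bullet> i))"

definition in_Lq :: "'b measure \<Rightarrow> real \<Rightarrow> ('b \<Rightarrow> 'c::{banach,second_countable_topology}) \<Rightarrow> bool" where
  "in_Lq \<nu> q f \<longleftrightarrow> f \<in> borel_measurable \<nu> \<and> integrable \<nu> (\<lambda>x. norm (f x) powr q)"

text \<open>\<open>adjoint_grad \<nu> q F g\<close>: F belongs to the domain of D^* (adjoint in L^q of the
  closure in L^p of D : C^1_b(H) \<rightarrow> L^p(H,\<nu>;H)) and D^*(F) = g (as elements of L^q).\<close>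
definition adjoint_grad :: "'a::euclidean_space measure \<Rightarrow> real \<Rightarrow> ('a \<Rightarrow> 'a) \<Rightarrow> ('a \<Rightarrow> real) \<Rightarrow> bool" where
  "adjoint_grad \<nu> q F g \<longleftrightarrow> in_Lq \<nu> q F \<and> in_Lq \<nu> q g \<and>
     (\<forall>\<phi>. C1b \<phi> \<longrightarrow> (\<integral>x. grad \<phi> x \<bullet> F x \<partial>\<nu>) = (\<integral>x. \<phi> x * g x \<partial>\<nu>))"

text \<open>Standard H-valued Brownian motion on the probability space M (continuous paths,
  W 0 = 0, independent increments, W t - W s ~ N(0,(t-s) I); the Gaussian law of the
  increment is expressed by Cramer--Wold: every direction u \<noteq> 0 gives N(0,(t-s)|u|^2)).\<close>
definition brownian_motion :: "'w measure \<Rightarrow> (real \<Rightarrow> 'w \<Rightarrow> 'a::euclidean_space) \<Rightarrow> bool" where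
  "brownian_motion M W \<longleftrightarrow> prob_space M \<and>
     (\<forall>t. W t \<in> borel_measurable M) \<and>
     (\<forall>\<omega>\<in>space M. W 0 \<omega> = 0 \<and> continuous_on {0..} (\<lambda>t. W t \<omega>)) \<and>
     (\<forall>(n::nat) (t::nat \<Rightarrow> real). 0 \<le> t 0 \<and> (\<forall>i<n. t i < t (Suc i)) \<longrightarrow>
        prob_space.indep_vars M (\<lambda>_. borel) (\<lambda>i \<omega>. W (t (Suc i)) \<omega> - W (t i) \<omega>) {..<n}) \<and>
     (\<forall>s t u. 0 \<le> s \<and> s < t \<and> u \<noteq> 0 \<longrightarrow>
        distributed M lborel (\<lambda>\<omega>. u \<bullet> (W t \<omega> - W s \<omega>)) (normal_density 0 (sqrt (t - s) * norm u)))"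

text \<open>X x t \<omega> is the (pathwise, since the noise is additive) solution of
  X(t) = x + \<integral>_0^t b(X(s)) ds + W(t).\<close>
definition sde_solution :: "'w measure \<Rightarrow> ('a::euclidean_space \<Rightarrow> 'a) \<Rightarrow> (real \<Rightarrow> 'w \<Rightarrow> 'a)
    \<Rightarrow> ('a \<Rightarrow> real \<Rightarrow> 'w \<Rightarrow> 'a) \<Rightarrow> bool" where
  "sde_solution M b W X \<longleftrightarrow>
     (\<forall>x t. X x t \<in> borel_measurable M) \<and>
     (\<forall>x. \<forall>\<omega>\<in>space M. continuous_on {0..} (\<lambda>t. X x t \<omega>) \<and>
        (\<forall>t\<ge>0. X x t \<omega> = x + integral {0..t} (\<lambda>s. b (X x s \<omega>)) + W t \<omega>))"

definition transition :: "'w measure \<Rightarrow> ('a \<Rightarrow> real \<Rightarrow> 'w \<Rightarrow> 'a) \<Rightarrow> real \<Rightarrow> ('a \<Rightarrow> real) \<Rightarrow> 'a \<Rightarrow> real" where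
  "transition M X t \<phi> x = (\<integral>\<omega>. \<phi> (X x t \<omega>) \<partial>M)"

definition invariant_measure :: "'w measure \<Rightarrow> ('a::euclidean_space \<Rightarrow> real \<Rightarrow> 'w \<Rightarrow> 'a) \<Rightarrow> 'a measure \<Rightarrow> bool" where
  "invariant_measure M X \<nu> \<longleftrightarrow> prob_space \<nu> \<and> sets \<nu> = sets borel \<and>
     (\<forall>t\<ge>0. \<forall>\<phi>. continuous_on UNIV \<phi> \<and> bounded (range \<phi>) \<longrightarrow>
        (\<integral>x. transition M X t \<phi> x \<partial>\<nu>) = (\<integral>x. \<phi> x \<partial>\<nu>))"

end

theory Submission
  imports Defs
begin


lemma grad_eq:
  assumes "(\<psi> has_derivative D) (at x)"
  shows "grad \<psi> x = (\<Sum>i\<in>Basis. D i *\<^sub>R i)"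
  using frechet_derivative_at[OF assms] by (simp add: grad_def)

lemma grad_inner:
  assumes "(\<psi> has_derivative D) (at x)"
  shows "grad \<psi> x \<bullet> z = D z"
proof -
  have lin: "linear D" using has_derivative_linear[OF assms] .
  have "grad \<psi> x \<bullet> z = (\<Sum>i\<in>Basis. D i * (i \<bullet> z))"
    by (simp add: grad_eq[OF assms] inner_sum_left)
  also have "\<dots> = (\<Sum>i\<in>Basis. D ((z \<bullet> i) *\<^sub>R i))"
    by (simp add: linear_scale[OF lin] inner_commute mult.commute)
  also have "\<dots> = D (\<Sum>i\<in>Basis. (z \<bullet> i) *\<^sub>R i)"
    by (simp add: linear_sum[OF lin])
  also have "\<dots> = D z" by (simp add: euclidean_representation)
  finally show ?thesis .
qed

lemma C1b_deriv:
  assumes "C1b \<psi>"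
  shows "(\<psi> has_derivative (\<lambda>z. grad \<psi> x \<bullet> z)) (at x)"
proof -
  have d: "(\<psi> has_derivative frechet_derivative \<psi> (at x)) (at x)"
    using assms frechet_derivative_works unfolding C1b_def by blast
  have "frechet_derivative \<psi> (at x) = (\<lambda>z. grad \<psi> x \<bullet> z)"
    using grad_inner[OF d] by auto
  with d show ?thesis by simp
qed

lemma C1b_cont: "C1b \<psi> \<Longrightarrow> continuous_on UNIV \<psi>"
  unfolding C1b_def
  by (meson differentiable_at_imp_differentiable_on differentiable_imp_continuous_on)

lemma bdd_range: "bounded (range g) \<Longrightarrow> \<exists>B. \<forall>x. norm (g x) \<le> B"
  by (auto simp: bounded_iff)

lemma bdd_rangeI: "(\<And>x. norm (g x) \<le> B) \<Longrightarrow> bounded (range g)"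
  by (auto simp: bounded_iff)

lemma C1b_grad_bdd: "C1b \<psi> \<Longrightarrow> \<exists>B. \<forall>x. norm (grad \<psi> x) \<le> B"
  unfolding C1b_def using bdd_range by blast

lemma C1b_bdd: "C1b \<psi> \<Longrightarrow> \<exists>B. \<forall>x. \<bar>\<psi> x\<bar> \<le> B"
  unfolding C1b_def using bdd_range by fastforce

lemma C1bI:
  assumes "\<And>x. (\<psi> has_derivative (\<lambda>z. G x \<bullet> z)) (at x)"
    and "continuous_on UNIV G" and "\<And>x. norm (G x) \<le> B" and "\<And>x. \<bar>\<psi> x\<bar> \<le> C"
  shows "C1b \<psi>" "grad \<psi> = G"
proof -
  have g: "grad \<psi> x = G x" for x
  proof -
    have "grad \<psi> x \<bullet> z = G x \<bullet> z" for z using grad_inner[OF assms(1)] by simp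
    then show ?thesis by (metis euclidean_eqI)
  qed
  then show "grad \<psi> = G" by auto
  show "C1b \<psi>" unfolding C1b_def
  proof (intro conjI allI)
    show "bounded (range \<psi>)" using assms(4) by (intro bdd_rangeI[of _ C]) simp
    show "\<psi> differentiable at x" for x using assms(1) by (auto simp: differentiable_def)
    show "continuous_on UNIV (grad \<psi>)" using assms(2) g by simp
    show "bounded (range (grad \<psi>))" using assms(3) g by (intro bdd_rangeI[of _ B]) simp
  qed
qed

lemma C1b_mult:
  assumes "C1b \<phi>" "C1b \<psi>"
  shows "C1b (\<lambda>x. \<phi> x * \<psi> x)"
    "grad (\<lambda>x. \<phi> x * \<psi> x) = (\<lambda>x. \<phi> x *\<^sub>R grad \<psi> x + \<psi> x *\<^sub>R grad \<phi> x)"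
proof -
  obtain B1 where B1: "\<And>x. \<bar>\<phi> x\<bar> \<le> B1" using C1b_bdd[OF assms(1)] by blast
  obtain B2 where B2: "\<And>x. \<bar>\<psi> x\<bar> \<le> B2" using C1b_bdd[OF assms(2)] by blast
  obtain G1 where G1: "\<And>x. norm (grad \<phi> x) \<le> G1" using C1b_grad_bdd[OF assms(1)] by blast
  obtain G2 where G2: "\<And>x. norm (grad \<psi> x) \<le> G2" using C1b_grad_bdd[OF assms(2)] by blast
  have d: "((\<lambda>x. \<phi> x * \<psi> x) has_derivative (\<lambda>z. (\<phi> x *\<^sub>R grad \<psi> x + \<psi> x *\<^sub>R grad \<phi> x) \<bullet> z)) (at x)" for x
  proof -
    have "((\<lambda>x. \<phi> x * \<psi> x) has_derivative (\<lambda>z. \<phi> x * (grad \<psi> x \<bullet> z) + (grad \<phi> x \<bullet> z) * \<psi> x)) (at x)"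
      by (rule has_derivative_mult[OF C1b_deriv[OF assms(1)] C1b_deriv[OF assms(2)]])
    then show ?thesis by (simp add: inner_add_left algebra_simps)
  qed
  have c: "continuous_on UNIV (\<lambda>x. \<phi> x *\<^sub>R grad \<psi> x + \<psi> x *\<^sub>R grad \<phi> x)"
    using assms C1b_cont unfolding C1b_def by (intro continuous_intros) auto
  have n: "norm (\<phi> x *\<^sub>R grad \<psi> x + \<psi> x *\<^sub>R grad \<phi> x) \<le> B1 * G2 + B2 * G1" for x
  proof -
    have "norm (\<phi> x *\<^sub>R grad \<psi> x + \<psi> x *\<^sub>R grad \<phi> x) \<le> \<bar>\<phi> x\<bar> * norm (grad \<psi> x) + \<bar>\<psi> x\<bar> * norm (grad \<phi> x)"
      by (metis norm_scaleR norm_triangle_ineq)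
    also have "\<dots> \<le> B1 * G2 + B2 * G1"
      by (intro add_mono mult_mono B1 B2 G1 G2) (auto intro: order_trans[OF abs_ge_zero B1] order_trans[OF abs_ge_zero B2])
    finally show ?thesis .
  qed
  have a: "\<bar>\<phi> x * \<psi> x\<bar> \<le> B1 * B2" for x
    unfolding abs_mult by (intro mult_mono B1 B2) (auto intro: order_trans[OF abs_ge_zero B1])
  show "C1b (\<lambda>x. \<phi> x * \<psi> x)" by (rule C1bI(1)[OF d c n a])
  show "grad (\<lambda>x. \<phi> x * \<psi> x) = (\<lambda>x. \<phi> x *\<^sub>R grad \<psi> x + \<psi> x *\<^sub>R grad \<phi> x)"
    by (rule C1bI(2)[OF d c n a])
qed


lemma C1b_add:
  assumes "C1b \<phi>" "C1b \<psi>"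
  shows "C1b (\<lambda>x. \<phi> x + \<psi> x)"
proof -
  obtain B1 where B1: "\<And>x. \<bar>\<phi> x\<bar> \<le> B1" using C1b_bdd[OF assms(1)] by blast
  obtain B2 where B2: "\<And>x. \<bar>\<psi> x\<bar> \<le> B2" using C1b_bdd[OF assms(2)] by blast
  obtain G1 where G1: "\<And>x. norm (grad \<phi> x) \<le> G1" using C1b_grad_bdd[OF assms(1)] by blast
  obtain G2 where G2: "\<And>x. norm (grad \<psi> x) \<le> G2" using C1b_grad_bdd[OF assms(2)] by blast
  have d: "((\<lambda>x. \<phi> x + \<psi> x) has_derivative (\<lambda>z. (grad \<phi> x + grad \<psi> x) \<bullet> z)) (at x)" for x
    using has_derivative_add[OF C1b_deriv[OF assms(1)] C1b_deriv[OF assms(2)]]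
    by (simp add: inner_add_left)
  have c: "continuous_on UNIV (\<lambda>x. grad \<phi> x + grad \<psi> x)"
    using assms unfolding C1b_def by (intro continuous_intros) auto
  have n: "norm (grad \<phi> x + grad \<psi> x) \<le> G1 + G2" for x
    by (meson G1 G2 add_mono norm_triangle_ineq order_trans)
  have a: "\<bar>\<phi> x + \<psi> x\<bar> \<le> B1 + B2" for x
    by (meson B1 B2 abs_triangle_ineq add_mono order_trans)
  show ?thesis by (rule C1bI(1)[OF d c n a])
qed

lemma C1b_cmult:
  assumes "C1b \<psi>"
  shows "C1b (\<lambda>x. c * \<psi> x)"
proof -
  have "C1b (\<lambda>x. c)"
    by (rule C1bI(1)[where G="\<lambda>x. 0" and B=0 and C="\<bar>c\<bar>"]) auto
  then show ?thesis using C1b_mult(1)[OF _ assms] by blast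
qed

lemma C1b_sum:
  assumes "finite S" "\<And>i. i \<in> S \<Longrightarrow> C1b (\<psi> i)"
  shows "C1b (\<lambda>x. \<Sum>i\<in>S. \<psi> i x)"
  using assms
proof (induction S rule: finite_induct)
  case empty
  show ?case by simp (rule C1bI(1)[where G="\<lambda>x. 0" and B=0 and C=0]; auto)
next
  case (insert a S)
  then show ?case by (simp add: C1b_add)
qed

lemma meas_cont:
  assumes "sets \<nu> = sets borel" "continuous_on UNIV g"
  shows "g \<in> borel_measurable \<nu>"
  using borel_measurable_continuous_onI[OF assms(2)] measurable_cong_sets[OF assms(1) refl] by blast

lemma onb_expand:
  fixes e :: "nat \<Rightarrow> 'a::euclidean_space"
  assumes onb: "\<forall>i\<in>{1..DIM('a)}. \<forall>j\<in>{1..DIM('a)}. e i \<bullet> e j = (if i = j then 1 else 0)"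
  shows "x = (\<Sum>h=1..DIM('a). (x \<bullet> e h) *\<^sub>R e h)"
proof -
  let ?n = "DIM('a)"
  let ?E = "e ` {1..?n}"
  have inj: "inj_on e {1..?n}"
  proof (rule inj_onI)
    fix i j assume "i \<in> {1..?n}" "j \<in> {1..?n}" "e i = e j"
    then show "i = j" using onb by (metis one_neq_zero)
  qed
  have card: "card ?E = ?n" using card_image[OF inj] by simp
  have nz: "0 \<notin> ?E" using onb by force
  have po: "pairwise orthogonal ?E"
    unfolding pairwise_def orthogonal_def using onb by fastforce
  have ind: "independent ?E" by (rule pairwise_orthogonal_independent[OF po nz])
  have "dim ?E = ?n" using dim_eq_card_independent[OF ind] card by simp
  then have sp: "span ?E = UNIV" using dim_eq_full by blast
  define y where "y = x - (\<Sum>h=1..?n. (x \<bullet> e h) *\<^sub>R e h)"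
  have o: "orthogonal y u" if uE: "u \<in> ?E" for u
  proof -
    obtain k where k: "k \<in> {1..?n}" "u = e k" using uE by blast
    have "(\<Sum>h=1..?n. (x \<bullet> e h) * (e h \<bullet> e k)) = (\<Sum>h=1..?n. if h = k then x \<bullet> e k else 0)"
      using onb k by (intro sum.cong) auto
    also have "\<dots> = x \<bullet> e k" using k by simp
    finally have "(\<Sum>h=1..?n. (x \<bullet> e h) * (e h \<bullet> e k)) = x \<bullet> e k" .
    then show ?thesis unfolding orthogonal_def y_def k
      by (simp add: inner_diff_left inner_sum_left)
  qed
  have "orthogonal y y" using orthogonal_to_span[of y ?E y] o sp by auto
  then have "y = 0" by (simp add: orthogonal_def)
  then show ?thesis unfolding y_def by simp
qed


lemma powr_sum_bound:
  fixes a :: "'i \<Rightarrow> real"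
  assumes "finite S" "\<And>k. k \<in> S \<Longrightarrow> a k \<ge> 0" "q > 0"
  shows "(\<Sum>k\<in>S. a k) powr q \<le> real (card S) powr q * (\<Sum>k\<in>S. a k powr q)"
proof (cases "S = {}")
  case True then show ?thesis by simp
next
  case False
  define M where "M = Max (a ` S)"
  have Min: "M \<in> a ` S" unfolding M_def using assms(1) False by (intro Max_in) auto
  then obtain k0 where k0: "k0 \<in> S" "M = a k0" by blast
  have le: "a k \<le> M" if "k \<in> S" for k unfolding M_def using assms(1) that by (intro Max_ge) auto
  have "(\<Sum>k\<in>S. a k) \<le> (\<Sum>k\<in>S. M)" using le by (intro sum_mono) auto
  also have "\<dots> = real (card S) * M" by simp
  finally have s: "(\<Sum>k\<in>S. a k) \<le> real (card S) * M" .
  have M0: "M \<ge> 0" using k0 assms(2) by simp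
  have "(\<Sum>k\<in>S. a k) powr q \<le> (real (card S) * M) powr q"
    using s assms by (intro powr_mono2) (auto intro: sum_nonneg)
  also have "\<dots> = real (card S) powr q * M powr q" using M0 by (simp add: powr_mult)
  also have "\<dots> \<le> real (card S) powr q * (\<Sum>k\<in>S. a k powr q)"
  proof (intro mult_left_mono)
    show "M powr q \<le> (\<Sum>k\<in>S. a k powr q)" unfolding k0(2)
      using assms(1) k0(1) by (intro member_le_sum) auto
  qed simp
  finally show ?thesis .
qed

lemma in_Lq_bdd:
  fixes F :: "'b \<Rightarrow> 'c::{banach,second_countable_topology}"
  assumes "prob_space \<nu>" "F \<in> borel_measurable \<nu>" "\<And>x. norm (F x) \<le> B" "q > 0"
  shows "in_Lq \<nu> q F"
  unfolding in_Lq_def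
proof
  show "F \<in> borel_measurable \<nu>" by fact
  interpret prob_space \<nu> by fact
  show "integrable \<nu> (\<lambda>x. norm (F x) powr q)"
  proof (rule integrable_const_bound[where B="B powr q"])
    show "AE x in \<nu>. norm (norm (F x) powr q) \<le> B powr q"
      using assms(3,4) by (intro AE_I2) (simp add: powr_mono2)
    show "(\<lambda>x. norm (F x) powr q) \<in> borel_measurable \<nu>" using assms(2) by measurable
  qed
qed

lemma in_Lq_mult:
  fixes w g :: "'b \<Rightarrow> real"
  assumes "in_Lq \<nu> q w" "g \<in> borel_measurable \<nu>" "\<And>x. \<bar>g x\<bar> \<le> B" "q > 0"
  shows "in_Lq \<nu> q (\<lambda>x. w x * g x)"
  unfolding in_Lq_def
proof
  have wm: "w \<in> borel_measurable \<nu>" and wi: "integrable \<nu> (\<lambda>x. norm (w x) powr q)"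
    using assms(1) unfolding in_Lq_def by auto
  show "(\<lambda>x. w x * g x) \<in> borel_measurable \<nu>" using wm assms(2) by measurable
  have B0: "B \<ge> 0" using assms(3) abs_ge_zero order_trans by blast
  show "integrable \<nu> (\<lambda>x. norm (w x * g x) powr q)"
  proof (rule Bochner_Integration.integrable_bound[OF integrable_mult_right[OF wi, of "B powr q"]])
    show "(\<lambda>x. norm (w x * g x) powr q) \<in> borel_measurable \<nu>" using wm assms(2) by measurable
    show "AE x in \<nu>. norm (norm (w x * g x) powr q) \<le> norm (B powr q * norm (w x) powr q)"
    proof (intro AE_I2)
      fix x
      have "norm (w x * g x) powr q = \<bar>w x\<bar> powr q * \<bar>g x\<bar> powr q"
        by (simp add: abs_mult powr_mult)
      also have "\<dots> \<le> \<bar>w x\<bar> powr q * B powr q"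
        using assms(3,4) by (intro mult_left_mono powr_mono2) auto
      finally show "norm (norm (w x * g x) powr q) \<le> norm (B powr q * norm (w x) powr q)"
        by (simp add: mult.commute)
    qed
  qed
qed

lemma in_Lq_sum:
  fixes a :: "'i \<Rightarrow> 'b \<Rightarrow> real"
  assumes "finite S" "\<And>k. k \<in> S \<Longrightarrow> in_Lq \<nu> q (a k)" "q > 0"
  shows "in_Lq \<nu> q (\<lambda>x. \<Sum>k\<in>S. a k x)"
  unfolding in_Lq_def
proof
  have m: "\<And>k. k \<in> S \<Longrightarrow> a k \<in> borel_measurable \<nu>"
    and i: "\<And>k. k \<in> S \<Longrightarrow> integrable \<nu> (\<lambda>x. norm (a k x) powr q)"
    using assms(2) unfolding in_Lq_def by auto
  show sm: "(\<lambda>x. \<Sum>k\<in>S. a k x) \<in> borel_measurable \<nu>"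
    using m by (intro borel_measurable_sum) auto
  show "integrable \<nu> (\<lambda>x. norm (\<Sum>k\<in>S. a k x) powr q)"
  proof (rule Bochner_Integration.integrable_bound[OF integrable_mult_right[OF Bochner_Integration.integrable_sum[OF i], of "real (card S) powr q"]])
    show "(\<lambda>x. norm (\<Sum>k\<in>S. a k x) powr q) \<in> borel_measurable \<nu>" using sm by measurable
    show "AE x in \<nu>. norm (norm (\<Sum>k\<in>S. a k x) powr q)
           \<le> norm (real (card S) powr q * (\<Sum>k\<in>S. norm (a k x) powr q))"
    proof (intro AE_I2)
      fix x
      have "norm (\<Sum>k\<in>S. a k x) powr q \<le> (\<Sum>k\<in>S. \<bar>a k x\<bar>) powr q"
        using assms(3) by (intro powr_mono2) (auto simp: sum_abs)
      also have "\<dots> \<le> real (card S) powr q * (\<Sum>k\<in>S. \<bar>a k x\<bar> powr q)"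
        using assms by (intro powr_sum_bound) auto
      finally show "norm (norm (\<Sum>k\<in>S. a k x) powr q)
           \<le> norm (real (card S) powr q * (\<Sum>k\<in>S. norm (a k x) powr q))"
        by (simp add: sum_nonneg)
    qed
  qed
qed


definition BC :: "('a::euclidean_space \<Rightarrow> real) \<Rightarrow> bool" where
  "BC g \<longleftrightarrow> continuous_on UNIV g \<and> (\<exists>B. \<forall>x. \<bar>g x\<bar> \<le> B)"

lemma BC_C1b: "C1b \<psi> \<Longrightarrow> BC \<psi>"
  unfolding BC_def using C1b_cont C1b_bdd by blast

lemma BC_grad: "C1b \<psi> \<Longrightarrow> BC (\<lambda>x. grad \<psi> x \<bullet> z)"
proof -
  assume a: "C1b \<psi>"
  obtain G where G: "\<And>x. norm (grad \<psi> x) \<le> G" using C1b_grad_bdd[OF a] by blast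
  have "\<bar>grad \<psi> x \<bullet> z\<bar> \<le> G * norm z" for x
    by (meson G Cauchy_Schwarz_ineq2 mult_right_mono norm_ge_zero order_trans)
  moreover have "continuous_on UNIV (\<lambda>x. grad \<psi> x \<bullet> z)"
    using a unfolding C1b_def by (intro continuous_intros) auto
  ultimately show ?thesis unfolding BC_def by blast
qed

lemma BC_mult: "BC f \<Longrightarrow> BC g \<Longrightarrow> BC (\<lambda>x. f x * g x)"
proof -
  assume a: "BC f" "BC g"
  then obtain B1 B2 where B1: "\<And>x. \<bar>f x\<bar> \<le> B1" and B2: "\<And>x. \<bar>g x\<bar> \<le> B2"
    unfolding BC_def by blast
  have "\<bar>f x * g x\<bar> \<le> B1 * B2" for x
    unfolding abs_mult by (intro mult_mono B1 B2) (auto intro: order_trans[OF abs_ge_zero B1] order_trans[OF abs_ge_zero B2])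
  moreover have "continuous_on UNIV (\<lambda>x. f x * g x)"
    using a unfolding BC_def by (intro continuous_intros) auto
  ultimately show ?thesis unfolding BC_def by blast
qed

lemma BC_int:
  assumes "prob_space \<nu>" "sets \<nu> = sets borel" "BC g"
  shows "integrable \<nu> g"
proof -
  interpret prob_space \<nu> by fact
  obtain B where B: "\<And>x. \<bar>g x\<bar> \<le> B" using assms(3) unfolding BC_def by blast
  show ?thesis
    using assms B by (intro integrable_const_bound[where B=B] AE_I2 meas_cont) (auto simp: BC_def)
qed

lemma BC_meas: "sets \<nu> = sets borel \<Longrightarrow> BC g \<Longrightarrow> g \<in> borel_measurable \<nu>"
  unfolding BC_def using meas_cont by blast

lemma BC_Lq: "prob_space \<nu> \<Longrightarrow> sets \<nu> = sets borel \<Longrightarrow> BC g \<Longrightarrow> q > 0 \<Longrightarrow> in_Lq \<nu> q g"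
  using BC_meas in_Lq_bdd unfolding BC_def by (metis real_norm_def)

lemma v_int:
  assumes "integrable \<nu> w" "sets \<nu> = sets borel" "BC g"
  shows "integrable \<nu> (\<lambda>x. w x * g x)"
proof -
  obtain B where B: "\<And>x. \<bar>g x\<bar> \<le> B" using assms(3) unfolding BC_def by blast
  show ?thesis
  proof (rule Bochner_Integration.integrable_bound[OF integrable_mult_right[OF assms(1), of B]])
    show "(\<lambda>x. w x * g x) \<in> borel_measurable \<nu>"
      using borel_measurable_integrable[OF assms(1)] BC_meas[OF assms(2,3)] by measurable
    show "AE x in \<nu>. norm (w x * g x) \<le> norm (B * w x)"
    proof (intro AE_I2)
      fix x
      have "\<bar>w x * g x\<bar> \<le> \<bar>w x\<bar> * B" unfolding abs_mult by (intro mult_left_mono B) auto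
      then show "norm (w x * g x) \<le> norm (B * w x)"
        using B[of x] by (simp add: abs_mult mult.commute)
    qed
  qed
qed

lemma in_Lq_add:
  fixes a b :: "'b \<Rightarrow> real"
  assumes "in_Lq \<nu> q a" "in_Lq \<nu> q b" "q > 0"
  shows "in_Lq \<nu> q (\<lambda>x. a x + b x)"
proof -
  have "in_Lq \<nu> q (\<lambda>x. \<Sum>k\<in>{True,False}. (if k then a else b) x)"
    using assms by (intro in_Lq_sum) auto
  then show ?thesis by simp
qed

lemma in_Lq_uminus:
  fixes a :: "'b \<Rightarrow> real"
  shows "in_Lq \<nu> q a \<Longrightarrow> in_Lq \<nu> q (\<lambda>x. - a x)"
  unfolding in_Lq_def by (auto intro: borel_measurable_uminus)



lemma main:
  fixes \<nu> :: "'a::euclidean_space measure" and e :: "nat \<Rightarrow> 'a"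
    and v :: "'a \<Rightarrow> 'a \<Rightarrow> real" and f :: "nat \<Rightarrow> 'a \<Rightarrow> real" and F :: "'a \<Rightarrow> 'a"
  assumes P: "prob_space \<nu>" and S: "sets \<nu> = sets borel"
    and v_L1: "\<And>z. integrable \<nu> (v z)"
    and v_ibp: "\<And>z \<phi>. C1b \<phi> \<Longrightarrow> (\<integral>x. grad \<phi> x \<bullet> z \<partial>\<nu>) = (\<integral>x. v z x * \<phi> x \<partial>\<nu>)"
    and v_Lr: "\<And>z r. r \<ge> 1 \<Longrightarrow> in_Lq \<nu> r (v z)"
    and q1: "q > 1"
    and f_C1b: "\<And>h. h \<in> {1..n} \<Longrightarrow> C1b (f h)"
    and F_def: "\<And>x. F x = (\<Sum>h=1..n. f h x *\<^sub>R e h)"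
  shows "adjoint_grad \<nu> q F (\<lambda>x. - divergence F x + (\<Sum>h=1..n. v (e h) x * f h x))"
proof -
  have Fe: "F = (\<lambda>x. \<Sum>h=1..n. f h x *\<^sub>R e h)" using F_def by auto
  have Fd: "(F has_derivative (\<lambda>z. \<Sum>h=1..n. (grad (f h) x \<bullet> z) *\<^sub>R e h)) (at x)" for x
    unfolding Fe using f_C1b
    by (intro has_derivative_sum has_derivative_scaleR_left C1b_deriv) auto
  have div: "divergence F x = (\<Sum>h=1..n. grad (f h) x \<bullet> e h)" for x
  proof -
    have "divergence F x = (\<Sum>i\<in>Basis. (\<Sum>h=1..n. (grad (f h) x \<bullet> i) *\<^sub>R e h) \<bullet> i)"
      unfolding divergence_def frechet_derivative_at[OF Fd, symmetric] ..
    also have "\<dots> = (\<Sum>i\<in>Basis. \<Sum>h=1..n. (grad (f h) x \<bullet> i) * (e h \<bullet> i))"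
      by (simp add: inner_sum_left)
    also have "\<dots> = (\<Sum>h=1..n. \<Sum>i\<in>Basis. (grad (f h) x \<bullet> i) * (e h \<bullet> i))"
      by (rule sum.swap)
    also have "\<dots> = (\<Sum>h=1..n. grad (f h) x \<bullet> e h)"
      by (intro sum.cong refl) (rule euclidean_inner[symmetric])
    finally show ?thesis .
  qed
  define g where "g = (\<lambda>x. - divergence F x + (\<Sum>h=1..n. v (e h) x * f h x))"
  have g_eq: "g = (\<lambda>x. \<Sum>h=1..n. v (e h) x * f h x + - (grad (f h) x \<bullet> e h))"
    unfolding g_def div by (auto simp: sum.distrib sum_negf sum_subtractf)
  have q0: "q > 0" using q1 by simp
  have BCf: "BC (f h)" if "h \<in> {1..n}" for h using f_C1b[OF that] by (rule BC_C1b)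
  have BCg: "BC (\<lambda>x. grad (f h) x \<bullet> z)" if "h \<in> {1..n}" for h z using f_C1b[OF that] by (rule BC_grad)
  have inF: "in_Lq \<nu> q F"
  proof -
    obtain Bf where Bf: "\<And>h x. h \<in> {1..n} \<Longrightarrow> \<bar>f h x\<bar> \<le> Bf h"
      using BCf unfolding BC_def by metis
    have "norm (F x) \<le> (\<Sum>h=1..n. Bf h * norm (e h))" for x
    proof -
      have "norm (F x) \<le> (\<Sum>h=1..n. norm (f h x *\<^sub>R e h))" unfolding F_def by (rule norm_sum)
      also have "\<dots> \<le> (\<Sum>h=1..n. Bf h * norm (e h))"
        using Bf by (intro sum_mono) (auto intro: mult_right_mono)
      finally show ?thesis .
    qed
    moreover have "F \<in> borel_measurable \<nu>"
      using BCf unfolding Fe BC_def by (intro meas_cont S continuous_intros) auto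
    ultimately show ?thesis using in_Lq_bdd[OF P] q0 by blast
  qed
  have ing: "in_Lq \<nu> q g"
    unfolding g_eq
  proof (intro in_Lq_sum in_Lq_add in_Lq_uminus)
    fix h assume h: "h \<in> {1..n}"
    obtain B where B: "\<And>x. \<bar>f h x\<bar> \<le> B" using BCf[OF h] unfolding BC_def by blast
    show "in_Lq \<nu> q (\<lambda>x. v (e h) x * f h x)"
      using q1 by (intro in_Lq_mult[OF v_Lr _ B q0] BC_meas[OF S] BCf[OF h]) auto
    show "in_Lq \<nu> q (\<lambda>x. grad (f h) x \<bullet> e h)"
      by (rule BC_Lq[OF P S BCg[OF h] q0])
  qed (use q0 in auto)
  have ibp: "(\<integral>x. grad \<phi> x \<bullet> F x \<partial>\<nu>) = (\<integral>x. \<phi> x * g x \<partial>\<nu>)" if phi: "C1b \<phi>" for \<phi>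
  proof -
    have BCp: "BC \<phi>" by (rule BC_C1b[OF phi])
    have per: "(\<integral>x. f h x * (grad \<phi> x \<bullet> e h) \<partial>\<nu>)
        = (\<integral>x. v (e h) x * (\<phi> x * f h x) \<partial>\<nu>) - (\<integral>x. \<phi> x * (grad (f h) x \<bullet> e h) \<partial>\<nu>)"
      if h: "h \<in> {1..n}" for h
    proof -
      have C: "C1b (\<lambda>x. \<phi> x * f h x)" by (rule C1b_mult(1)[OF phi f_C1b[OF h]])
      have gr: "grad (\<lambda>x. \<phi> x * f h x) x \<bullet> e h = \<phi> x * (grad (f h) x \<bullet> e h) + f h x * (grad \<phi> x \<bullet> e h)" for x
        unfolding C1b_mult(2)[OF phi f_C1b[OF h]] by (simp add: inner_add_left)
      have i1: "integrable \<nu> (\<lambda>x. \<phi> x * (grad (f h) x \<bullet> e h))"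
        by (intro BC_int[OF P S] BC_mult BCp BCg h)
      have i2: "integrable \<nu> (\<lambda>x. f h x * (grad \<phi> x \<bullet> e h))"
        by (intro BC_int[OF P S] BC_mult BCf BC_grad phi h)
      have "(\<integral>x. v (e h) x * (\<phi> x * f h x) \<partial>\<nu>) = (\<integral>x. grad (\<lambda>x. \<phi> x * f h x) x \<bullet> e h \<partial>\<nu>)"
        using v_ibp[OF C] by simp
      also have "\<dots> = (\<integral>x. \<phi> x * (grad (f h) x \<bullet> e h) \<partial>\<nu>) + (\<integral>x. f h x * (grad \<phi> x \<bullet> e h) \<partial>\<nu>)"
        unfolding gr by (rule Bochner_Integration.integral_add[OF i1 i2])
      finally show ?thesis by simp
    qed
    have "(\<integral>x. grad \<phi> x \<bullet> F x \<partial>\<nu>) = (\<integral>x. (\<Sum>h=1..n. f h x * (grad \<phi> x \<bullet> e h)) \<partial>\<nu>)"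
      unfolding F_def by (simp add: inner_sum_right mult.commute)
    also have "\<dots> = (\<Sum>h=1..n. (\<integral>x. f h x * (grad \<phi> x \<bullet> e h) \<partial>\<nu>))"
      by (intro Bochner_Integration.integral_sum BC_int[OF P S] BC_mult BCf BC_grad phi) auto
    also have "\<dots> = (\<Sum>h=1..n. (\<integral>x. v (e h) x * (\<phi> x * f h x) \<partial>\<nu>) - (\<integral>x. \<phi> x * (grad (f h) x \<bullet> e h) \<partial>\<nu>))"
      using per by (intro sum.cong) auto
    also have "\<dots> = (\<Sum>h=1..n. (\<integral>x. v (e h) x * (\<phi> x * f h x) - \<phi> x * (grad (f h) x \<bullet> e h) \<partial>\<nu>))"
    proof (intro sum.cong refl Bochner_Integration.integral_diff[symmetric])
      fix h assume h: "h \<in> {1..n}"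
      show "integrable \<nu> (\<lambda>x. v (e h) x * (\<phi> x * f h x))"
        by (intro v_int[OF v_L1 S] BC_mult BCp BCf h)
      show "integrable \<nu> (\<lambda>x. \<phi> x * (grad (f h) x \<bullet> e h))"
        by (intro BC_int[OF P S] BC_mult BCp BCg h)
    qed
    also have "\<dots> = (\<integral>x. (\<Sum>h=1..n. v (e h) x * (\<phi> x * f h x) - \<phi> x * (grad (f h) x \<bullet> e h)) \<partial>\<nu>)"
    proof (rule Bochner_Integration.integral_sum[symmetric])
      fix h assume h: "h \<in> {1..n}"
      show "integrable \<nu> (\<lambda>x. v (e h) x * (\<phi> x * f h x) - \<phi> x * (grad (f h) x \<bullet> e h))"
        by (intro Bochner_Integration.integrable_diff v_int[OF v_L1 S] BC_int[OF P S] BC_mult BCp BCf BCg h)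
    qed
    also have "\<dots> = (\<integral>x. \<phi> x * g x \<partial>\<nu>)"
      unfolding g_eq by (simp add: sum_distrib_left algebra_simps)
    finally show ?thesis .
  qed
  show ?thesis unfolding adjoint_grad_def g_def[symmetric] using inF ing ibp by blast
qed


theorem proposition3p7:
  fixes b :: "'a::euclidean_space \<Rightarrow> 'a"
    and b' :: "'a \<Rightarrow> 'a \<Rightarrow>\<^sub>L 'a"
    and \<omega> a K :: real and N :: nat
    and M :: "'w measure" and W :: "real \<Rightarrow> 'w \<Rightarrow> 'a" and X :: "'a \<Rightarrow> real \<Rightarrow> 'w \<Rightarrow> 'a"
    and \<nu> :: "'a measure"
    and e :: "nat \<Rightarrow> 'a"
    and v :: "'a \<Rightarrow> 'a \<Rightarrow> real"
    and p q :: real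
    and f :: "nat \<Rightarrow> 'a \<Rightarrow> real"
    and F :: "'a \<Rightarrow> 'a"
  assumes b_C1: "\<And>x. (b has_derivative blinfun_apply (b' x)) (at x)" "continuous_on UNIV b'"
    and \<omega>_pos: "\<omega> > 0" and a_nonneg: "a \<ge> 0" and K_pos: "K > 0"
    and dissip: "\<And>x. b x \<bullet> x \<le> - \<omega> * (norm x)\<^sup>2 + a"
    and growth: "\<And>x. norm (b x) + norm (b' x) \<le> K * (1 + norm x ^ (2 * N))"
    and BM: "brownian_motion M W"
    and sol: "sde_solution M b W X"
    and inv: "invariant_measure M X \<nu>"
    and onb: "\<forall>i\<in>{1..DIM('a)}. \<forall>j\<in>{1..DIM('a)}. e i \<bullet> e j = (if i = j then 1 else 0)"
    and v_L1: "\<And>z. integrable \<nu> (v z)"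
    and v_ibp: "\<And>z \<phi>. C1b \<phi> \<Longrightarrow> (\<integral>x. grad \<phi> x \<bullet> z \<partial>\<nu>) = (\<integral>x. v z x * \<phi> x \<partial>\<nu>)"
    and v_Lr: "\<And>z r. r \<ge> 1 \<Longrightarrow> in_Lq \<nu> r (v z)"
    and p_gt1: "p > 1" and q_def: "q = p / (p - 1)"
    and f_C1b: "\<And>h. h \<in> {1..DIM('a)} \<Longrightarrow> C1b (f h)"
    and F_def: "\<And>x. F x = (\<Sum>h=1..DIM('a). f h x *\<^sub>R e h)"
  shows "adjoint_grad \<nu> q F
           (\<lambda>x. - divergence F x + (\<Sum>h=1..DIM('a). v (e h) x * f h x))
       \<and> (\<forall>\<phi>. C2b \<phi> \<longrightarrow>
           (\<exists>g. adjoint_grad \<nu> q (grad \<phi>) g \<and>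
              (AE x in \<nu>. - (1/2) * g x
                 = (1/2) * laplacian \<phi> x - (1/2) * (\<Sum>h=1..DIM('a). v (e h) x * (grad \<phi> x \<bullet> e h)))))"
proof -
  have P: "prob_space \<nu>" and S: "sets \<nu> = sets borel"
    using inv unfolding invariant_measure_def by auto
  have q1: "q > 1"
  proof -
    have "q - 1 = 1 / (p - 1)" using p_gt1 unfolding q_def by (simp add: field_simps)
    moreover have "1 / (p - 1) > 0" using p_gt1 by simp
    ultimately show ?thesis by linarith
  qed
  have part1: "adjoint_grad \<nu> q F (\<lambda>x. - divergence F x + (\<Sum>h=1..DIM('a). v (e h) x * f h x))"
    by (rule main[OF P S v_L1 v_ibp v_Lr q1 f_C1b F_def])
  have part2: "\<exists>g. adjoint_grad \<nu> q (grad \<phi>) g \<and>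
              (AE x in \<nu>. - (1/2) * g x
                 = (1/2) * laplacian \<phi> x - (1/2) * (\<Sum>h=1..DIM('a). v (e h) x * (grad \<phi> x \<bullet> e h)))"
    if C2: "C2b \<phi>" for \<phi>
  proof -
    have Ci: "C1b (\<lambda>x. grad \<phi> x \<bullet> i)" if "i \<in> Basis" for i
      using C2 that unfolding C2b_def by blast
    have Ch: "C1b (\<lambda>x. grad \<phi> x \<bullet> e h)" for h
    proof -
      have eq: "(\<lambda>x. grad \<phi> x \<bullet> e h) = (\<lambda>x. \<Sum>i\<in>Basis. (e h \<bullet> i) * (grad \<phi> x \<bullet> i))"
        by (rule ext, subst euclidean_inner) (simp add: mult.commute)
      show ?thesis unfolding eq by (intro C1b_sum C1b_cmult Ci) auto
    qed
    have ex: "grad \<phi> x = (\<Sum>h=1..DIM('a). (grad \<phi> x \<bullet> e h) *\<^sub>R e h)" for x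
      by (rule onb_expand[OF onb])
    have adj: "adjoint_grad \<nu> q (grad \<phi>)
       (\<lambda>x. - divergence (grad \<phi>) x + (\<Sum>h=1..DIM('a). v (e h) x * (grad \<phi> x \<bullet> e h)))"
      by (rule main[OF P S v_L1 v_ibp v_Lr q1 Ch ex])
    show ?thesis
      by (rule exI, rule conjI[OF adj], rule AE_I2) (simp add: laplacian_def algebra_simps)
  qed
  show ?thesis using part1 part2 by blast
qed

end
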